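(* Let $R$ and $S$ be commutative rings with identity, $f:R\to S$ a surjective ring homomorphism, and $J$ a nonzero proper ideal of $S$. Then $R\bowtie^f J$ is a properly zipped ring if and only if $R$ is a properly zipped ring.
   Context: $R\bowtie^f J:=\{(r,f(r)+j)\mid r\in R,\ j\in J\}$, a subring of $R\times S$. A commutative ring $A$ is properly zipped if whenever a prime ideal $\mathfrak{p}$ of $A$ contains the intersection of a family $\{\mathfrak{p}_i\}_i$ of prime ideals of $A$, then $\mathfrak{p}_i\subseteq\mathfrak{p}$ for some $i$. *)

theory Defs
  imports "HOL-Algebra.Algebra"
begin

definition amalgamation ::
  "('a, 'm) ring_scheme \<Rightarrow> ('b, 'n) ring_scheme \<Rightarrow> ('a \<Rightarrow> 'b) \<Rightarrow> 'b set \<Rightarrow> ('a \<times> 'b) ring"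
  where "amalgamation R S f J =
    (RDirProd R S) \<lparr> carrier := {(r, f r \<oplus>\<^bsub>S\<^esub> j) | r j. r \<in> carrier R \<and> j \<in> J} \<rparr>"

definition properly_zipped :: "('a, 'm) ring_scheme \<Rightarrow> bool"
  where "properly_zipped A \<longleftrightarrow>
    (\<forall>P q. (\<forall>p\<in>P. primeideal p A) \<longrightarrow> primeideal q A \<longrightarrow> \<Inter>P \<subseteq> q \<longrightarrow>
       (\<exists>p\<in>P. p \<subseteq> q))"

end

theory Submission
  imports Defs
begin


lemma amal_carrier: "carrier (amalgamation R S f J) = {(r, f r \<oplus>\<^bsub>S\<^esub> j) | r j. r \<in> carrier R \<and> j \<in> J}"
  by (simp add: amalgamation_def)
lemma amal_mult[simp]: "(a,b) \<otimes>\<^bsub>amalgamation R S f J\<^esub> (c,d) = (a \<otimes>\<^bsub>R\<^esub> c, b \<otimes>\<^bsub>S\<^esub> d)"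
  by (simp add: amalgamation_def RDirProd_def DirProd_def monoid.defs)
lemma amal_add[simp]: "(a,b) \<oplus>\<^bsub>amalgamation R S f J\<^esub> (c,d) = (a \<oplus>\<^bsub>R\<^esub> c, b \<oplus>\<^bsub>S\<^esub> d)"
  by (simp add: amalgamation_def RDirProd_def DirProd_def monoid.defs)
lemma amal_one[simp]: "\<one>\<^bsub>amalgamation R S f J\<^esub> = (\<one>\<^bsub>R\<^esub>, \<one>\<^bsub>S\<^esub>)"
  by (simp add: amalgamation_def RDirProd_def DirProd_def monoid.defs)
lemma amal_zero[simp]: "\<zero>\<^bsub>amalgamation R S f J\<^esub> = (\<zero>\<^bsub>R\<^esub>, \<zero>\<^bsub>S\<^esub>)"
  by (simp add: amalgamation_def RDirProd_def DirProd_def monoid.defs)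
lemma D_mult[simp]: "(a,b) \<otimes>\<^bsub>RDirProd R S\<^esub> (c,d) = (a \<otimes>\<^bsub>R\<^esub> c, b \<otimes>\<^bsub>S\<^esub> d)"
  by (simp add: RDirProd_def DirProd_def monoid.defs)
lemma D_add[simp]: "(a,b) \<oplus>\<^bsub>RDirProd R S\<^esub> (c,d) = (a \<oplus>\<^bsub>R\<^esub> c, b \<oplus>\<^bsub>S\<^esub> d)"
  by (simp add: RDirProd_def DirProd_def monoid.defs)
lemma D_one[simp]: "\<one>\<^bsub>RDirProd R S\<^esub> = (\<one>\<^bsub>R\<^esub>, \<one>\<^bsub>S\<^esub>)"
  by (simp add: RDirProd_def DirProd_def monoid.defs)
lemma D_zero[simp]: "\<zero>\<^bsub>RDirProd R S\<^esub> = (\<zero>\<^bsub>R\<^esub>, \<zero>\<^bsub>S\<^esub>)"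
  by (simp add: RDirProd_def DirProd_def monoid.defs)

lemma D_inv:
  assumes "ring R" "ring S" "a \<in> carrier R" "b \<in> carrier S"
  shows "\<ominus>\<^bsub>RDirProd R S\<^esub> (a,b) = (\<ominus>\<^bsub>R\<^esub> a, \<ominus>\<^bsub>S\<^esub> b)"
proof -
  interpret D: ring "RDirProd R S" using RDirProd_ring assms by blast
  interpret R: ring R by fact
  interpret S: ring S by fact
  show ?thesis
    by (rule D.minus_equality) (use assms in \<open>auto simp: RDirProd_carrier R.l_neg S.l_neg\<close>)
qed

lemma amal_cring:
  assumes "cring R" and "cring S"
    and f: "f \<in> ring_hom R S" and "ideal J S"
  shows "cring (amalgamation R S f J)"
proof -
  interpret R: cring R by fact
  interpret S: cring S by fact
  interpret J: ideal J S by fact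
  interpret D: ring "RDirProd R S" using RDirProd_ring R.ring_axioms S.ring_axioms by blast
  interpret h: ring_hom_ring R S f using ring_hom_ringI2 R.ring_axioms S.ring_axioms f by blast
  let ?H = "{(r, f r \<oplus>\<^bsub>S\<^esub> j) | r j. r \<in> carrier R \<and> j \<in> J}"
  have sub: "?H \<subseteq> carrier (RDirProd R S)"
    by (auto simp: RDirProd_carrier)
  have "subcring ?H (RDirProd R S)"
  proof (rule D.subcringI[OF D.subringI[OF sub]])
    show "\<one>\<^bsub>RDirProd R S\<^esub> \<in> ?H"
      by (auto intro!: exI[of _ "\<one>\<^bsub>R\<^esub>"] exI[of _ "\<zero>\<^bsub>S\<^esub>"])
  next
    fix h assume "h \<in> ?H"
    then obtain r j where h: "h = (r, f r \<oplus>\<^bsub>S\<^esub> j)" "r \<in> carrier R" "j \<in> J" by blast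
    have jc: "j \<in> carrier S" using h J.a_subset by blast
    have "\<ominus>\<^bsub>RDirProd R S\<^esub> h = (\<ominus>\<^bsub>R\<^esub> r, f (\<ominus>\<^bsub>R\<^esub> r) \<oplus>\<^bsub>S\<^esub> \<ominus>\<^bsub>S\<^esub> j)"
      using h jc by (simp add: D_inv[OF R.ring_axioms S.ring_axioms] S.minus_add)
    then show "\<ominus>\<^bsub>RDirProd R S\<^esub> h \<in> ?H" using h J.a_inv_closed by blast
  next
    fix h1 h2 assume "h1 \<in> ?H" "h2 \<in> ?H"
    then obtain r j r' j' where h: "h1 = (r, f r \<oplus>\<^bsub>S\<^esub> j)" "r \<in> carrier R" "j \<in> J"
       "h2 = (r', f r' \<oplus>\<^bsub>S\<^esub> j')" "r' \<in> carrier R" "j' \<in> J" by blast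
    have jc: "j \<in> carrier S" "j' \<in> carrier S" using h J.a_subset by blast+
    have fc: "f r \<in> carrier S" "f r' \<in> carrier S" using h by auto
    have "h1 \<otimes>\<^bsub>RDirProd R S\<^esub> h2 = (r \<otimes>\<^bsub>R\<^esub> r', f (r \<otimes>\<^bsub>R\<^esub> r') \<oplus>\<^bsub>S\<^esub>
       (f r \<otimes>\<^bsub>S\<^esub> j' \<oplus>\<^bsub>S\<^esub> j \<otimes>\<^bsub>S\<^esub> f r' \<oplus>\<^bsub>S\<^esub> j \<otimes>\<^bsub>S\<^esub> j'))"
      using h jc fc by (simp add: S.l_distr S.r_distr S.a_ac)
    moreover have "f r \<otimes>\<^bsub>S\<^esub> j' \<oplus>\<^bsub>S\<^esub> j \<otimes>\<^bsub>S\<^esub> f r' \<oplus>\<^bsub>S\<^esub> j \<otimes>\<^bsub>S\<^esub> j' \<in> J"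
      using h jc fc by (intro J.a_closed J.I_l_closed J.I_r_closed) auto
    ultimately show "h1 \<otimes>\<^bsub>RDirProd R S\<^esub> h2 \<in> ?H" using h by blast
    have "h1 \<oplus>\<^bsub>RDirProd R S\<^esub> h2 = (r \<oplus>\<^bsub>R\<^esub> r', f (r \<oplus>\<^bsub>R\<^esub> r') \<oplus>\<^bsub>S\<^esub> (j \<oplus>\<^bsub>S\<^esub> j'))"
      using h jc fc by (simp add: S.a_ac)
    then show "h1 \<oplus>\<^bsub>RDirProd R S\<^esub> h2 \<in> ?H" using h J.a_closed by blast
    show "h1 \<otimes>\<^bsub>RDirProd R S\<^esub> h2 = h2 \<otimes>\<^bsub>RDirProd R S\<^esub> h1"
      using h jc fc by (simp add: R.m_comm S.m_comm)
  qed
  then show ?thesis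
    using D.subcring_iff[OF sub] by (simp add: amalgamation_def)
qed


lemma prime_sub: "primeideal p A \<Longrightarrow> p \<subseteq> carrier A"
  using primeideal.axioms(1) ideal.axioms(1) additive_subgroup.a_subset by blast

lemma zipped_empty:
  assumes "primeideal q A" "\<Inter>P \<subseteq> q" "P = {}"
  shows False
proof -
  interpret primeideal q A by fact
  show False using assms a_subset I_notcarr by auto
qed

lemma hom_key:
  assumes "ring A" "ring B" "h \<in> ring_hom A B" "ideal p A"
    and K: "{x \<in> carrier A. h x = \<zero>\<^bsub>B\<^esub>} \<subseteq> p"
    and x: "x \<in> carrier A" "h x \<in> h ` p"
  shows "x \<in> p"
proof -
  interpret hh: ring_hom_ring A B h using ring_hom_ringI2 assms(1-3) by blast
  interpret p: ideal p A by fact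
  obtain y where y: "y \<in> p" "h x = h y" using x by blast
  have yc: "y \<in> carrier A" using y p.a_subset by blast
  have "h (x \<ominus>\<^bsub>A\<^esub> y) = \<zero>\<^bsub>B\<^esub>" using x yc y by (simp add: hh.hom_a_inv hh.R.minus_eq hh.S.r_neg hh.S.minus_eq[symmetric])
  then have "x \<ominus>\<^bsub>A\<^esub> y \<in> p" using K x yc by auto
  then have "(x \<ominus>\<^bsub>A\<^esub> y) \<oplus>\<^bsub>A\<^esub> y \<in> p" using y p.a_closed by blast
  moreover have "(x \<ominus>\<^bsub>A\<^esub> y) \<oplus>\<^bsub>A\<^esub> y = x" using x yc
    by (simp add: hh.R.minus_eq hh.R.a_assoc hh.R.l_neg)
  ultimately show ?thesis by simp
qed

lemma image_prime:
  assumes "cring A" "cring B" "h \<in> ring_hom A B" "h ` carrier A = carrier B" "primeideal p A"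
    and K: "{x \<in> carrier A. h x = \<zero>\<^bsub>B\<^esub>} \<subseteq> p"
  shows "primeideal (h ` p) B"
proof -
  interpret A: cring A by fact
  interpret B: cring B by fact
  interpret hh: ring_hom_ring A B h using ring_hom_ringI2 A.ring_axioms B.ring_axioms assms(3) by blast
  interpret p: primeideal p A by fact
  have key: "\<And>x. x \<in> carrier A \<Longrightarrow> h x \<in> h ` p \<Longrightarrow> x \<in> p"
    using hom_key[OF A.ring_axioms B.ring_axioms assms(3) p.is_ideal K] by blast
  have sub: "h ` p \<subseteq> carrier B" using p.a_subset by auto
  have ne: "h ` p \<noteq> {}" using p.zero_closed by blast
  have inv: "\<ominus>\<^bsub>B\<^esub> a \<in> h ` p" if ha: "a \<in> h ` p" for a
  proof -
    obtain x where x: "x \<in> p" "a = h x" using ha by blast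
    have xc: "x \<in> carrier A" using x p.a_subset by blast
    have "\<ominus>\<^bsub>B\<^esub> a = h (\<ominus>\<^bsub>A\<^esub> x)" using x xc hh.hom_a_inv by simp
    then show ?thesis using imageI[OF p.a_inv_closed[OF x(1)], of h] by simp
  qed
  have add: "a \<oplus>\<^bsub>B\<^esub> b \<in> h ` p" if ha: "a \<in> h ` p" "b \<in> h ` p" for a b
  proof -
    obtain x y where x: "x \<in> p" "a = h x" "y \<in> p" "b = h y" using ha by blast
    have xc: "x \<in> carrier A" "y \<in> carrier A" using x p.a_subset by blast+
    have "a \<oplus>\<^bsub>B\<^esub> b = h (x \<oplus>\<^bsub>A\<^esub> y)" using x xc by simp
    then show ?thesis using imageI[OF p.a_closed[OF x(1) x(3)], of h] by simp
  qed
  have mul: "x \<otimes>\<^bsub>B\<^esub> a \<in> h ` p \<and> a \<otimes>\<^bsub>B\<^esub> x \<in> h ` p" if ha: "a \<in> h ` p" "x \<in> carrier B" for a x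
  proof -
    obtain y where x1: "y \<in> p" "a = h y" using ha by blast
    have "x \<in> h ` carrier A" using ha assms(4) by simp
    then obtain z where x2: "z \<in> carrier A" "x = h z" by blast
    note x = x1 x2
    have yc: "y \<in> carrier A" using x p.a_subset by blast
    have "x \<otimes>\<^bsub>B\<^esub> a = h (z \<otimes>\<^bsub>A\<^esub> y)" "a \<otimes>\<^bsub>B\<^esub> x = h (y \<otimes>\<^bsub>A\<^esub> z)" using x yc by simp_all
    then show ?thesis using imageI[OF p.I_l_closed[OF x(1) x(3)], of h] imageI[OF p.I_r_closed[OF x(1) x(3)], of h] by simp
  qed
  have sg: "subgroup (h ` p) (add_monoid B)"
    by (rule B.add.subgroupI[OF sub ne]) (auto intro: inv add)
  have "ideal (h ` p) B"
    by (rule idealI[OF B.ring_axioms sg]) (simp_all add: mul)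
  moreover have "carrier B \<noteq> h ` p"
  proof
    assume cp: "carrier B = h ` p"
    have "\<one>\<^bsub>B\<^esub> \<in> h ` p" using cp B.one_closed by simp
    then have "\<one>\<^bsub>A\<^esub> \<in> p" using key[of "\<one>\<^bsub>A\<^esub>"] by simp
    then show False using p.one_imp_carrier p.I_notcarr by simp
  qed
  moreover have "\<And>a b. a \<in> carrier B \<Longrightarrow> b \<in> carrier B \<Longrightarrow> a \<otimes>\<^bsub>B\<^esub> b \<in> h ` p \<Longrightarrow> a \<in> h ` p \<or> b \<in> h ` p"
  proof -
    fix a b assume ab: "a \<in> carrier B" "b \<in> carrier B" "a \<otimes>\<^bsub>B\<^esub> b \<in> h ` p"
    have "a \<in> h ` carrier A" "b \<in> h ` carrier A" using ab assms(4) by simp_all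
    then obtain x y where xy: "x \<in> carrier A" "a = h x" "y \<in> carrier A" "b = h y" by blast
    have "h (x \<otimes>\<^bsub>A\<^esub> y) \<in> h ` p" using xy ab by simp
    then have "x \<otimes>\<^bsub>A\<^esub> y \<in> p" using key xy by blast
    then have "x \<in> p \<or> y \<in> p" using p.I_prime xy by blast
    then show "a \<in> h ` p \<or> b \<in> h ` p" using xy by auto
  qed
  ultimately show ?thesis using primeidealI B.is_cring by blast
qed

lemma zipped_lift:
  assumes "cring A" "cring B" "h \<in> ring_hom A B" "h ` carrier A = carrier B"
    and Z: "properly_zipped B"
    and P: "\<forall>p\<in>P. primeideal p A \<and> {x \<in> carrier A. h x = \<zero>\<^bsub>B\<^esub>} \<subseteq> p"
    and q: "primeideal q A" and sub: "\<Inter>P \<inter> carrier A \<subseteq> q" and ne: "P \<noteq> {}"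
  shows "\<exists>p\<in>P. p \<subseteq> q"
proof -
  interpret A: cring A by fact
  interpret B: cring B by fact
  interpret q: primeideal q A by fact
  let ?K = "{x \<in> carrier A. h x = \<zero>\<^bsub>B\<^esub>}"
  have "?K \<subseteq> \<Inter>P \<inter> carrier A" using P by auto
  then have Kq: "?K \<subseteq> q" using sub by (rule order_trans)
  have keyq: "\<And>x. x \<in> carrier A \<Longrightarrow> h x \<in> h ` q \<Longrightarrow> x \<in> q"
    using hom_key[OF A.ring_axioms B.ring_axioms assms(3) q.is_ideal Kq] by simp
  have keyp: "x \<in> p" if hp: "p \<in> P" "x \<in> carrier A" "h x \<in> h ` p" for p x
  proof -
    have pp: "primeideal p A" "?K \<subseteq> p" using P hp(1) by auto
    have "ideal p A" using pp(1) primeideal.axioms(1) by auto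
    from hom_key[OF A.ring_axioms B.ring_axioms assms(3) this pp(2) hp(2,3)] show ?thesis .
  qed
  have pr: "\<forall>p'\<in>(\<lambda>p. h ` p) ` P. primeideal p' B"
  proof
    fix p' assume "p' \<in> (\<lambda>p. h ` p) ` P"
    then obtain p where hp: "p \<in> P" "p' = h ` p" by auto
    have pp: "primeideal p A" "?K \<subseteq> p" using P hp(1) by auto
    show "primeideal p' B" using image_prime[OF assms(1-4) pp] hp(2) by simp
  qed
  have prq: "primeideal (h ` q) B" using image_prime[OF assms(1-4) q Kq] .
  have inter: "\<Inter>((\<lambda>p. h ` p) ` P) \<subseteq> h ` q"
  proof
    fix y assume y: "y \<in> \<Inter>((\<lambda>p. h ` p) ` P)"
    obtain p0 where p0: "p0 \<in> P" using ne by auto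
    then have y0: "y \<in> h ` p0" using y by auto
    have "primeideal p0 A" using P p0 by auto
    then have "p0 \<subseteq> carrier A" by (rule prime_sub)
    then have "h ` p0 \<subseteq> h ` carrier A" by (rule image_mono)
    then have "y \<in> h ` carrier A" using y0 by auto
    then obtain x where x: "x \<in> carrier A" "y = h x" by auto
    have "x \<in> p" if "p \<in> P" for p
      using keyp[OF that x(1)] y x(2) that by auto
    then have "x \<in> \<Inter>P \<inter> carrier A" using x(1) by auto
    then have "x \<in> q" using sub by auto
    then show "y \<in> h ` q" using x(2) by auto
  qed
  have "\<exists>p'\<in>(\<lambda>p. h ` p) ` P. p' \<subseteq> h ` q"
    using Z[unfolded properly_zipped_def, rule_format, OF pr[rule_format] prq inter] .
  then obtain p where p: "p \<in> P" "h ` p \<subseteq> h ` q" by auto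
  have "p \<subseteq> q"
  proof
    fix x assume xp: "x \<in> p"
    have "primeideal p A" using P p(1) by auto
    then have "p \<subseteq> carrier A" by (rule prime_sub)
    then have "x \<in> carrier A" using xp by auto
    moreover have "h x \<in> h ` q" using p(2) xp by auto
    ultimately show "x \<in> q" by (rule keyq)
  qed
  then show ?thesis using p(1) by auto
qed

lemma zipped_quot:
  assumes "cring A" "cring B" "h \<in> ring_hom A B" "h ` carrier A = carrier B"
    and Z: "properly_zipped A"
  shows "properly_zipped B"
  unfolding properly_zipped_def
proof (intro allI impI)
  fix P q assume P: "\<forall>p\<in>P. primeideal p B" and q: "primeideal q B" and sub: "\<Inter>P \<subseteq> q"
  interpret A: cring A by fact
  interpret B: cring B by fact
  interpret hh: ring_hom_ring A B h using ring_hom_ringI2 A.ring_axioms B.ring_axioms assms(3) by blast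
  have ne: "P \<noteq> {}" using zipped_empty[OF q sub] by auto
  let ?pre = "\<lambda>p. {x \<in> carrier A. h x \<in> p}"
  have pr: "\<forall>p'\<in>?pre ` P. primeideal p' A"
  proof
    fix p' assume "p' \<in> ?pre ` P"
    then obtain p where hp: "p \<in> P" "p' = ?pre p" by auto
    have "primeideal p B" using P hp(1) by auto
    from hh.primeideal_vimage[OF A.is_cring this] show "primeideal p' A" using hp(2) by simp
  qed
  have prq: "primeideal (?pre q) A" using hh.primeideal_vimage[OF A.is_cring q] .
  have inter: "\<Inter>(?pre ` P) \<subseteq> ?pre q"
  proof
    fix x assume x: "x \<in> \<Inter>(?pre ` P)"
    obtain p0 where p0: "p0 \<in> P" using ne by auto
    have xc: "x \<in> carrier A" using x p0 by auto
    have "h x \<in> \<Inter>P" using x by auto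
    then show "x \<in> ?pre q" using sub xc by auto
  qed
  have "\<exists>p'\<in>?pre ` P. p' \<subseteq> ?pre q"
    using Z[unfolded properly_zipped_def, rule_format, OF pr[rule_format] prq inter] .
  then obtain p where p: "p \<in> P" "?pre p \<subseteq> ?pre q" by auto
  have "p \<subseteq> q"
  proof
    fix y assume y: "y \<in> p"
    have "primeideal p B" using P p(1) by auto
    then have "p \<subseteq> carrier B" by (rule prime_sub)
    then have "y \<in> h ` carrier A" using y assms(4) by auto
    then obtain x where x: "x \<in> carrier A" "y = h x" by auto
    then have "x \<in> ?pre p" using y by auto
    then have "x \<in> ?pre q" using p(2) by (rule rev_subsetD)
    then show "y \<in> q" using x(2) by auto
  qed
  then show "\<exists>p\<in>P. p \<subseteq> q" using p(1) by auto
qed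


theorem theorem4p7:
  fixes R :: "('a, 'm) ring_scheme" and S :: "('b, 'n) ring_scheme" and f :: "'a \<Rightarrow> 'b"
    and J :: "'b set"
  assumes "cring R" and "cring S"
    and "f \<in> ring_hom R S" and "f ` carrier R = carrier S"
    and "ideal J S" and "J \<noteq> {\<zero>\<^bsub>S\<^esub>}" and "J \<noteq> carrier S"
  shows "properly_zipped (amalgamation R S f J) \<longleftrightarrow> properly_zipped R"
proof -
  interpret R: cring R by fact
  interpret S: cring S by fact
  interpret Ji: ideal J S by fact
  interpret hf: ring_hom_ring R S f using ring_hom_ringI2 R.ring_axioms S.ring_axioms assms(3) by blast
  let ?A = "amalgamation R S f J"
  have crA: "cring ?A" using amal_cring assms(1,2,3,5) by blast
  have carA: "x \<in> carrier ?A \<longleftrightarrow> (\<exists>r j. x = (r, f r \<oplus>\<^bsub>S\<^esub> j) \<and> r \<in> carrier R \<and> j \<in> J)" for x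
    by (auto simp: amal_carrier)
  have carA2: "fst x \<in> carrier R \<and> snd x \<in> carrier S" if xA: "x \<in> carrier ?A" for x
  proof -
    obtain r j where x: "x = (r, f r \<oplus>\<^bsub>S\<^esub> j)" "r \<in> carrier R" "j \<in> J" using xA carA by auto
    have "j \<in> carrier S" using x(3) Ji.a_subset by auto
    then show ?thesis using x by auto
  qed
  have fst_hom: "fst \<in> ring_hom ?A R"
  proof (rule ring_hom_memI)
    fix x y assume "x \<in> carrier ?A" "y \<in> carrier ?A"
    then show "fst (x \<otimes>\<^bsub>?A\<^esub> y) = fst x \<otimes>\<^bsub>R\<^esub> fst y" "fst (x \<oplus>\<^bsub>?A\<^esub> y) = fst x \<oplus>\<^bsub>R\<^esub> fst y"
      by (cases x, cases y, simp)+
  qed (use carA2 in auto)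
  have snd_hom: "snd \<in> ring_hom ?A S"
  proof (rule ring_hom_memI)
    fix x y assume "x \<in> carrier ?A" "y \<in> carrier ?A"
    then show "snd (x \<otimes>\<^bsub>?A\<^esub> y) = snd x \<otimes>\<^bsub>S\<^esub> snd y" "snd (x \<oplus>\<^bsub>?A\<^esub> y) = snd x \<oplus>\<^bsub>S\<^esub> snd y"
      by (cases x, cases y, simp)+
  qed (use carA2 in auto)
  have emb: "(r, f r) \<in> carrier ?A" if rR: "r \<in> carrier R" for r
  proof -
    have "(r, f r) = (r, f r \<oplus>\<^bsub>S\<^esub> \<zero>\<^bsub>S\<^esub>)" using rR by simp
    then show ?thesis using carA rR Ji.zero_closed by blast
  qed
  have fst_surj: "fst ` carrier ?A = carrier R"
  proof
    show "fst ` carrier ?A \<subseteq> carrier R" using carA2 by auto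
    show "carrier R \<subseteq> fst ` carrier ?A"
    proof
      fix r assume "r \<in> carrier R"
      then have "fst (r, f r) \<in> fst ` carrier ?A" using emb by (intro imageI) 
      then show "r \<in> fst ` carrier ?A" by simp
    qed
  qed
  have snd_surj: "snd ` carrier ?A = carrier S"
  proof
    show "snd ` carrier ?A \<subseteq> carrier S" using carA2 by auto
    show "carrier S \<subseteq> snd ` carrier ?A"
    proof
      fix s assume "s \<in> carrier S"
      then obtain r where r: "r \<in> carrier R" "s = f r" using assms(4) by auto
      then have "snd (r, f r) \<in> snd ` carrier ?A" using emb by (intro imageI) 
      then show "s \<in> snd ` carrier ?A" using r by simp
    qed
  qed
  let ?K1 = "{x \<in> carrier ?A. fst x = \<zero>\<^bsub>R\<^esub>}"
  let ?K2 = "{x \<in> carrier ?A. snd x = \<zero>\<^bsub>S\<^esub>}"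
  have dich: "?K1 \<subseteq> p \<or> ?K2 \<subseteq> p" if pp: "primeideal p ?A" for p
  proof (rule ccontr)
    assume "\<not> (?K1 \<subseteq> p \<or> ?K2 \<subseteq> p)"
    then obtain x y where xy: "x \<in> ?K1" "x \<notin> p" "y \<in> ?K2" "y \<notin> p" by auto
    interpret p: primeideal p ?A by (rule pp)
    have "x \<otimes>\<^bsub>?A\<^esub> y = \<zero>\<^bsub>?A\<^esub>"
      using xy carA2[of x] carA2[of y] by (cases x, cases y) auto
    then have "x \<otimes>\<^bsub>?A\<^esub> y \<in> p" using additive_subgroup.zero_closed[OF ideal.axioms(1)[OF p.is_ideal]] by simp
    then have "x \<in> p \<or> y \<in> p" using p.I_prime[of x y] xy by simp
    then show False using xy by simp
  qed
  show ?thesis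
  proof
    assume "properly_zipped ?A"
    then show "properly_zipped R" using zipped_quot[OF crA assms(1) fst_hom fst_surj] by blast
  next
    assume zR: "properly_zipped R"
    have zS: "properly_zipped S" using zipped_quot[OF assms(1,2,3,4) zR] .
    show "properly_zipped ?A"
      unfolding properly_zipped_def
    proof (intro allI impI)
      fix P q assume P: "\<forall>p\<in>P. primeideal p ?A" and q: "primeideal q ?A" and sub: "\<Inter>P \<subseteq> q"
      interpret q: primeideal q ?A by (rule q)
      have qsub: "q \<subseteq> carrier ?A" using q by (rule prime_sub)
      let ?P1 = "{p \<in> P. ?K1 \<subseteq> p}"
      let ?P2 = "{p \<in> P. ?K2 \<subseteq> p}"
      have ne: "P' \<noteq> {}" if "\<Inter>P' \<inter> carrier ?A \<subseteq> q" for P'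
      proof
        assume "P' = {}"
        then have "carrier ?A \<subseteq> q" using that by simp
        then show False using qsub q.I_notcarr by auto
      qed
      have cases: "\<Inter>?P1 \<inter> carrier ?A \<subseteq> q \<or> \<Inter>?P2 \<inter> carrier ?A \<subseteq> q"
      proof (rule ccontr)
        assume "\<not> ?thesis"
        then obtain a b where ab: "a \<in> \<Inter>?P1" "a \<in> carrier ?A" "a \<notin> q"
          "b \<in> \<Inter>?P2" "b \<in> carrier ?A" "b \<notin> q" by blast
        have "a \<otimes>\<^bsub>?A\<^esub> b \<in> p" if pP: "p \<in> P" for p
        proof -
          have pp: "primeideal p ?A" using P pP by auto
          interpret p: primeideal p ?A by (rule pp)
          from dich[OF pp] show ?thesis
          proof
            assume "?K1 \<subseteq> p"
            then have "a \<in> p" using ab(1) pP by auto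
            then show ?thesis using p.I_r_closed ab(5) by auto
          next
            assume "?K2 \<subseteq> p"
            then have "b \<in> p" using ab(4) pP by auto
            then show ?thesis using p.I_l_closed ab(2) by auto
          qed
        qed
        then have "a \<otimes>\<^bsub>?A\<^esub> b \<in> q" using sub by auto
        then have "a \<in> q \<or> b \<in> q" using q.I_prime[of a b] ab(2,5) by simp
        then show False using ab(3,6) by simp
      qed
      then show "\<exists>p\<in>P. p \<subseteq> q"
      proof
        assume s1: "\<Inter>?P1 \<inter> carrier ?A \<subseteq> q"
        have "\<forall>p\<in>?P1. primeideal p ?A \<and> ?K1 \<subseteq> p" using P by auto
        from zipped_lift[OF crA assms(1) fst_hom fst_surj zR this q s1 ne[OF s1]]
        show ?thesis by auto
      next
        assume s2: "\<Inter>?P2 \<inter> carrier ?A \<subseteq> q"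
        have "\<forall>p\<in>?P2. primeideal p ?A \<and> ?K2 \<subseteq> p" using P by auto
        from zipped_lift[OF crA assms(2) snd_hom snd_surj zS this q s2 ne[OF s2]]
        show ?thesis by auto
      qed
    qed
  qed
qed

end
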